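(* Under Assumption 1, for any samples $\theta_1,\dots,\theta_M\in\Theta$, $\mathrm{VI}(F,\mathcal X\times\Delta_M)$ has at least one solution, and for every solution $z^*=(x^*,y^* )$ of it, $x^*$ is a Nash equilibrium of $\mathcal G$, i.e. $x^*\in\Omega$.
   Context: Let $\mathcal N=\{1,\dots,N\}$ be a set of agents. Agent $i$ chooses $x_i\in\mathcal X_i\subset\mathbb R^n$; write $x=(x_i)_{i\in\mathcal N}\in\mathcal X=\mathcal X_1\times\cdots\times\mathcal X_N\subset\mathbb R^{nN}$ and $x_{-i}=(x_j)_{j\neq i}$. Let $\Theta$ be a set, $f_i:\mathbb R^{nN}\to\mathbb R$ ($i\in\mathcal N$) and $g:\mathbb R^{nN}\times\Theta\to\mathbb R$. Given samples $\theta_1,\dots,\theta_M\in\Theta$, the game $\mathcal G$ is the one in which each agent $i$ minimizes over $x_i\in\mathcal X_i$ the cost $J_i(x_i,x_{-i})=f_i(x_i,x_{-i})+\max_{m\in\{1,\dots,M\}}g(x_i,x_{-i},\theta_m)$; its Nash equilibrium set is $\Omega=\{x^*\in\mathcal X: x_i^*\in\arg\min_{x_i\in\mathcal X_i}J_i(x_i,x^*_{-i})\ \forall i\}$. Assumption 1: (i) for every $\theta\in\Theta$ and every $x_{-i}\in\prod_{j\ne i}\mathcal X_j$, the function $f_i(\cdot,x_{-i})+g(\cdot,x_{-i},\theta)$ is convex and continuously differentiable, and each $\mathcal X_i$ is nonempty, compact and convex; (ii) for every $\theta$ and $i$, $g(\cdot,\theta)$ and $f_i$ are twice differentiable on an open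 convex set containing $\mathcal X$; (iii) there are $\chi^f,\chi^g\in\mathbb R$ with $\chi^f+\chi^g\ge0$ such that for all $u,v\in\mathbb R^{nN}$ and $\theta\in\Theta$: $(u-v)^\top\big((\nabla_{u_i}f_i(u))_{i}-(\nabla_{v_i}f_i(v))_{i}\big)\ge\chi^f\|u-v\|^2$ and $(u-v)^\top(\nabla_u g(u,\theta)-\nabla_v g(v,\theta))\ge\chi^g\|u-v\|^2$. Augmented formulation: $\Delta_M=\{y\in\mathbb R^M: y\ge0,\ \sum_m y_m=1\}$, $\hat g(x,y)=\sum_{m=1}^M y_m g(x,\theta_m)$, and $F:\mathcal X\times\Delta_M\to\mathbb R^{nN+M}$, $F(x,y)=\big((\nabla_{x_i}f_i(x)+\nabla_{x_i}\hat g(x,y))_{i\in\mathcal N},\ -(\nabla_{y_m}\hat g(x,y))_{m=1}^M\big)$. $\mathrm{VI}(F,\mathcal X\times\Delta_M)$ is the problem: find $z^*\in\mathcal X\times\Delta_M$ with $(z-z^* )^\top F(z^* )\ge0$ for all $z\in\mathcal X\times\Delta_M$. *)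

theory Defs
  imports "HOL-Analysis.Analysis"
begin

text \<open>Joint strategies x in R^(nN) are modelled as elements of real^'n^'a:
  'a is the (finite) index type of the agents (N = CARD('a)), 'n the index
  type of the coordinates of one agent's decision (n = CARD('n)).
  Sample indices m are elements of a finite type 'm (M = CARD('m)).\<close>

definition blk_upd :: "real^'n^'a \<Rightarrow> 'a \<Rightarrow> real^'n \<Rightarrow> real^'n^'a" where
  "blk_upd x i u = (\<chi> j. if j = i then u else x $ j)"

definition grad :: "('v::real_inner \<Rightarrow> real) \<Rightarrow> 'v \<Rightarrow> 'v" where
  "grad h v = (THE D. GDERIV h v :> D)"

definition pgrad :: "(real^'n^'a \<Rightarrow> real) \<Rightarrow> 'a \<Rightarrow> real^'n^'a \<Rightarrow> real^'n" where
  "pgrad h i x = grad (\<lambda>u. h (blk_upd x i u)) (x $ i)"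

definition prod_set :: "('a \<Rightarrow> (real^'n) set) \<Rightarrow> (real^'n^'a) set" where
  "prod_set X = {x. \<forall>i. x $ i \<in> X i}"

definition prob_simplex :: "(real^'m) set" where
  "prob_simplex = {y. (\<forall>m. 0 \<le> y $ m) \<and> (\<Sum>m\<in>UNIV. y $ m) = 1}"

definition cost :: "('a \<Rightarrow> real^'n^'a \<Rightarrow> real) \<Rightarrow> (real^'n^'a \<Rightarrow> 'th \<Rightarrow> real)
    \<Rightarrow> ('m::finite \<Rightarrow> 'th) \<Rightarrow> 'a \<Rightarrow> real^'n^'a \<Rightarrow> real" where
  "cost f g \<theta> i x = f i x + Max ((\<lambda>m. g x (\<theta> m)) ` UNIV)"

definition nash_set :: "('a \<Rightarrow> real^'n^'a \<Rightarrow> real) \<Rightarrow> (real^'n^'a \<Rightarrow> 'th \<Rightarrow> real)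
    \<Rightarrow> ('m::finite \<Rightarrow> 'th) \<Rightarrow> ('a \<Rightarrow> (real^'n) set) \<Rightarrow> (real^'n^'a) set" where
  "nash_set f g \<theta> X = {xs. xs \<in> prod_set X \<and>
     (\<forall>i. \<forall>u \<in> X i. cost f g \<theta> i xs \<le> cost f g \<theta> i (blk_upd xs i u))}"

definition ghat :: "(real^'n^'a \<Rightarrow> 'th \<Rightarrow> real) \<Rightarrow> ('m::finite \<Rightarrow> 'th)
    \<Rightarrow> real^'n^'a \<Rightarrow> real^'m \<Rightarrow> real" where
  "ghat g \<theta> x y = (\<Sum>m\<in>UNIV. y $ m * g x (\<theta> m))"

definition Fop :: "('a \<Rightarrow> real^'n^'a \<Rightarrow> real) \<Rightarrow> (real^'n^'a \<Rightarrow> 'th \<Rightarrow> real)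
    \<Rightarrow> ('m::finite \<Rightarrow> 'th) \<Rightarrow> (real^'n^'a) \<times> (real^'m) \<Rightarrow> (real^'n^'a) \<times> (real^'m)" where
  "Fop f g \<theta> z = (case z of (x, y) \<Rightarrow>
     ((\<chi> i. pgrad (f i) i x + pgrad (\<lambda>x'. ghat g \<theta> x' y) i x),
      - grad (\<lambda>y'. ghat g \<theta> x y') y))"

definition VI_sol :: "('v::real_inner \<Rightarrow> 'v) \<Rightarrow> 'v set \<Rightarrow> 'v \<Rightarrow> bool" where
  "VI_sol F K z \<longleftrightarrow> z \<in> K \<and> (\<forall>w\<in>K. 0 \<le> inner (w - z) (F z))"

end

theory Submission
  imports Defs
begin

lemma grad_eq:
  fixes h :: "'v::euclidean_space \<Rightarrow> real"
  assumes "GDERIV h v :> D" shows "grad h v = D"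
proof -
  have u: "D' = D" if "GDERIV h v :> D'" for D'
  proof -
    have "(\<lambda>k. inner k D') = (\<lambda>k. inner k D)"
      using has_derivative_unique that assms unfolding gderiv_def by blast
    then have "inner (D' - D) D' = inner (D' - D) D" by metis
    then have "inner (D' - D) (D' - D) = 0" by (simp add: inner_diff_right)
    then show ?thesis by simp
  qed
  show ?thesis unfolding grad_def using assms u by (rule the_equality)
qed

lemma grad_works:
  fixes h :: "'v::euclidean_space \<Rightarrow> real"
  assumes "h differentiable at v" shows "GDERIV h v :> grad h v"
proof -
  obtain h' where d: "(h has_derivative h') (at v)" using assms differentiable_def by blast
  then have lin: "linear h'" using has_derivative_linear by blast
  define D where "D = (\<Sum>b\<in>Basis. h' b *\<^sub>R b)"
  have "h' k = inner k D" for k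
  proof -
    have "h' k = h' (\<Sum>b\<in>Basis. inner k b *\<^sub>R b)" by (simp add: euclidean_representation)
    also have "\<dots> = (\<Sum>b\<in>Basis. inner k b * h' b)"
      using lin by (simp add: linear_sum linear_scale)
    also have "\<dots> = inner k D" unfolding D_def by (simp add: inner_sum_right mult.commute)
    finally show ?thesis .
  qed
  then have "GDERIV h v :> D" unfolding gderiv_def using d
    by (metis (no_types, lifting) ext)
  then show ?thesis using grad_eq by metis
qed

definition Lb :: "'a \<Rightarrow> real^'n \<Rightarrow> real^'n^'a" where
  "Lb i h = (\<chi> j. if j = i then h else 0)"

lemma blk_decomp: "blk_upd x i u = blk_upd x i 0 + Lb i u"
  unfolding blk_upd_def Lb_def by (simp add: vec_eq_iff)

lemma blk_diff: "blk_upd x i u - x = Lb i (u - x $ i)"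
  unfolding blk_upd_def Lb_def by (simp add: vec_eq_iff)

lemma blk_self: "blk_upd x i (x $ i) = x"
  unfolding blk_upd_def by (simp add: vec_eq_iff)

lemma inner_Lb: "inner (Lb i h) G = inner h (G $ i)"
proof -
  have "inner (Lb i h) G = (\<Sum>j\<in>UNIV. inner (Lb i h $ j) (G $ j))"
    by (rule inner_vec_def)
  also have "\<dots> = (\<Sum>j\<in>UNIV. if j = i then inner h (G $ i) else 0)"
    by (rule sum.cong) (auto simp: Lb_def)
  finally show ?thesis by simp
qed

lemma bl_Lb: "bounded_linear (Lb i)"
proof -
  have "linear (Lb i)" unfolding Lb_def by (rule linearI) (auto simp: vec_eq_iff)
  then show ?thesis by (simp add: linear_conv_bounded_linear)
qed

lemma blk_has_derivative: "((\<lambda>u. blk_upd x i u) has_derivative Lb i) F"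
  apply (subst blk_decomp)
  using bl_Lb[of i] bounded_linear.has_derivative[OF bl_Lb has_derivative_ident]
  by (auto intro!: derivative_eq_intros)

lemma gderiv_blk:
  assumes "h differentiable at x"
  shows "GDERIV (\<lambda>u. h (blk_upd x i u)) (x $ i) :> grad h x $ i"
proof -
  have "GDERIV h x :> grad h x" using grad_works assms by blast
  then have d: "(h has_derivative (\<lambda>k. inner k (grad h x))) (at (blk_upd x i (x$i)))"
    by (simp add: gderiv_def blk_self)
  show ?thesis unfolding gderiv_def
    using has_derivative_compose[OF blk_has_derivative d] by (simp add: inner_Lb)
qed

lemma pgrad_eq:
  assumes "h differentiable at x"
  shows "pgrad h i x = grad h x $ i"
  unfolding pgrad_def using gderiv_blk[OF assms] grad_eq by blast

lemma first_order_min: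
  fixes phi :: "'v::euclidean_space \<Rightarrow> real"
  assumes cvx: "convex_on UNIV phi" and d: "GDERIV phi a :> D" and ip: "0 \<le> inner (u - a) D"
  shows "phi a \<le> phi u"
proof -
  define dd where "dd = u - a"
  define psi where "psi t = phi (a + t *\<^sub>R dd)" for t :: real
  have cpsi: "convex_on UNIV psi"
  proof (rule convex_onI)
    fix t x y :: real assume "0 < t" "t < 1"
    have "a + ((1 - t) * x + t * y) *\<^sub>R dd = (1 - t) *\<^sub>R (a + x *\<^sub>R dd) + t *\<^sub>R (a + y *\<^sub>R dd)"
      by (simp add: algebra_simps scaleR_add_left[symmetric] del: scaleR_add_left)
    then show "psi ((1 - t) *\<^sub>R x + t *\<^sub>R y) \<le> (1 - t) * psi x + t * psi y"
      unfolding psi_def using convex_onD[OF cvx, of t "a + x *\<^sub>R dd" "a + y *\<^sub>R dd"] \<open>0<t\<close> \<open>t<1\<close>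
      by simp
  qed simp
  have d1: "((\<lambda>t. a + t *\<^sub>R dd) has_derivative (\<lambda>h. h *\<^sub>R dd)) (at 0)"
    by (auto intro!: derivative_eq_intros)
  have d2: "(phi has_derivative (\<lambda>k. inner k D)) (at (a + 0 *\<^sub>R dd))"
    using d by (simp add: gderiv_def)
  have "(psi has_derivative (\<lambda>h. inner dd D * h)) (at 0)"
    proof -
    have e: "(\<lambda>h. inner (h *\<^sub>R dd) D) = (\<lambda>h. inner dd D * h)" by (rule ext) simp
    show ?thesis using has_derivative_compose[OF d1 d2] unfolding psi_def e by simp
  qed
  then have "(psi has_field_derivative inner dd D) (at 0 within UNIV)"
    by (simp add: has_field_derivative_def)
  from convex_on_imp_above_tangent[OF cpsi connected_UNIV _ _ this, of 1]
  have "psi 1 - psi 0 \<ge> inner dd D" by simp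
  then show ?thesis using ip unfolding psi_def dd_def by simp
qed

lemma convex_on_sum_fun:
  fixes h :: "'m \<Rightarrow> 'v::real_vector \<Rightarrow> real"
  assumes "finite S" "\<And>m. m \<in> S \<Longrightarrow> 0 \<le> c m" "\<And>m. m \<in> S \<Longrightarrow> convex_on UNIV (h m)"
  shows "convex_on UNIV (\<lambda>u. \<Sum>m\<in>S. c m * h m u)"
  using assms
proof (induction S rule: finite_induct)
  case empty then show ?case by (simp add: convex_on_const)
next
  case (insert x F)
  then show ?case by (auto intro!: convex_on_add convex_on_cmul)
qed

lemma prod_set_props:
  fixes X :: "'a::finite \<Rightarrow> (real^'n) set"
  assumes "\<And>i. X i \<noteq> {} \<and> compact (X i) \<and> convex (X i)"
  shows "compact (prod_set X)" "convex (prod_set X)" "prod_set X \<noteq> {}"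
proof -
  have eq: "prod_set X = (\<Inter>i. (\<lambda>x. x $ i) -` X i)" unfolding prod_set_def by auto
  have "closed ((\<lambda>x::real^'n^'a. x $ i) -` X i)" for i
    using assms[of i] by (intro continuous_closed_vimage) (auto simp: compact_imp_closed intro: continuous_intros)
  then have cl: "closed (prod_set X)" unfolding eq by auto
  have "\<exists>B. \<forall>u\<in>X i. norm u \<le> B" for i
    using assms[of i] compact_imp_bounded bounded_iff by metis
  then obtain B where B: "\<And>i u. u \<in> X i \<Longrightarrow> norm u \<le> B i" by metis
  have "norm x \<le> (\<Sum>i\<in>UNIV. B i)" if "x \<in> prod_set X" for x
  proof -
    have "norm x \<le> (\<Sum>i\<in>UNIV. norm (x $ i))" by (simp add: norm_vec_def L2_set_le_sum)
    also have "\<dots> \<le> (\<Sum>i\<in>UNIV. B i)" using that B unfolding prod_set_def by (intro sum_mono) auto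
    finally show ?thesis .
  qed
  then have "bounded (prod_set X)" unfolding bounded_iff by blast
  then show "compact (prod_set X)" using cl by (simp add: compact_eq_bounded_closed)
  show "convex (prod_set X)" unfolding convex_def prod_set_def
    using assms by (auto simp: convex_def)
  have "(\<chi> i. SOME u. u \<in> X i) \<in> prod_set X"
    unfolding prod_set_def using assms by (simp add: some_in_eq)
  then show "prod_set X \<noteq> {}" by blast
qed

lemma simplex_props:
  shows "compact (prob_simplex :: (real^'m::finite) set)" "convex (prob_simplex :: (real^'m) set)"
    "(prob_simplex :: (real^'m) set) \<noteq> {}"
proof -
  have eq: "(prob_simplex :: (real^'m) set) = {y. \<forall>m. 0 \<le> y $ m} \<inter> (\<lambda>y. \<Sum>m\<in>UNIV. y $ m) -` {1}"
    unfolding prob_simplex_def by auto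
  have "closed ((\<lambda>y::real^'m. \<Sum>m\<in>UNIV. y $ m) -` {1})"
    by (intro continuous_closed_vimage) (auto intro!: continuous_intros)
  then have cl: "closed (prob_simplex :: (real^'m) set)" unfolding eq
    using closed_positive_orthant by blast
  have "norm y \<le> 1" if "y \<in> (prob_simplex :: (real^'m) set)" for y
  proof -
    have "norm y \<le> (\<Sum>m\<in>UNIV. \<bar>y $ m\<bar>)" by (rule norm_le_l1_cart)
    also have "\<dots> = (\<Sum>m\<in>UNIV. y $ m)" using that unfolding prob_simplex_def by simp
    also have "\<dots> = 1" using that unfolding prob_simplex_def by simp
    finally show ?thesis .
  qed
  then have "bounded (prob_simplex :: (real^'m) set)" unfolding bounded_iff by blast
  then show "compact (prob_simplex :: (real^'m) set)" using cl by (simp add: compact_eq_bounded_closed)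
  show "convex (prob_simplex :: (real^'m) set)" unfolding convex_def prob_simplex_def
    by (auto simp: sum.distrib sum_distrib_left[symmetric])
  have "(\<chi> m. 1 / real CARD('m)) \<in> (prob_simplex :: (real^'m) set)"
    unfolding prob_simplex_def by simp
  then show "(prob_simplex :: (real^'m) set) \<noteq> {}" by blast
qed

lemma ghat_x_gderiv:
  assumes "\<And>m. (\<lambda>w. g w (\<theta> m)) differentiable at x"
  shows "GDERIV (\<lambda>x'. ghat g \<theta> x' y) x :> (\<Sum>m\<in>UNIV. (y $ m) *\<^sub>R grad (\<lambda>w. g w (\<theta> m)) x)"
proof -
  have d: "((\<lambda>w. g w (\<theta> m)) has_derivative (\<lambda>k. inner k (grad (\<lambda>w. g w (\<theta> m)) x))) (at x)" for m
    using grad_works[OF assms[of m]] by (simp add: gderiv_def)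
  have "((\<lambda>x'. \<Sum>m\<in>UNIV. y $ m * g x' (\<theta> m)) has_derivative
        (\<lambda>k. \<Sum>m\<in>UNIV. y $ m * inner k (grad (\<lambda>w. g w (\<theta> m)) x))) (at x)"
    by (intro has_derivative_sum has_derivative_mult_right d)
  moreover have "(\<lambda>k. \<Sum>m\<in>UNIV. y $ m * inner k (grad (\<lambda>w. g w (\<theta> m)) x))
      = (\<lambda>k. inner k (\<Sum>m\<in>UNIV. (y $ m) *\<^sub>R grad (\<lambda>w. g w (\<theta> m)) x))"
    by (rule ext) (simp add: inner_sum_right)
  ultimately show ?thesis unfolding gderiv_def ghat_def by simp
qed

lemma ghat_y_gderiv:
  "GDERIV (\<lambda>y'. ghat g \<theta> x y') y :> (\<chi> m. g x (\<theta> m))"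
proof -
  have e: "(\<lambda>y'. ghat g \<theta> x y') = (\<lambda>y'. inner y' (\<chi> m. g x (\<theta> m)))"
    by (rule ext) (simp add: ghat_def inner_vec_def)
  show ?thesis unfolding e gderiv_def
    by (rule bounded_linear.has_derivative[OF bounded_linear_inner_left has_derivative_ident])
qed


lemma ghat_le_Max:
  fixes \<theta> :: "'m::finite \<Rightarrow> 'th"
  assumes "y \<in> prob_simplex"
  shows "ghat g \<theta> x y \<le> Max ((\<lambda>m. g x (\<theta> m)) ` UNIV)"
proof -
  have "ghat g \<theta> x y \<le> (\<Sum>m\<in>UNIV. y $ m * Max ((\<lambda>m. g x (\<theta> m)) ` UNIV))"
    unfolding ghat_def using assms unfolding prob_simplex_def
    by (intro sum_mono mult_left_mono) auto
  also have "\<dots> = Max ((\<lambda>m. g x (\<theta> m)) ` UNIV)"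
    using assms unfolding prob_simplex_def by (simp add: sum_distrib_right[symmetric])
  finally show ?thesis .
qed

lemma unit_in_simplex: "(\<chi> m. if m = k then (1::real) else 0) \<in> (prob_simplex :: (real^'m::finite) set)"
  unfolding prob_simplex_def by simp

lemma inner_unit: "inner (\<chi> m. if m = k then (1::real) else 0) (c :: real^'m::finite) = c $ k"
proof -
  have "inner (\<chi> m. if m = k then (1::real) else 0) c = (\<Sum>m\<in>UNIV. inner ((\<chi> m. if m = k then (1::real) else 0) $ m) (c $ m))"
    by (rule inner_vec_def)
  also have "\<dots> = (\<Sum>m\<in>UNIV. if m = k then c $ k else 0)" by (rule sum.cong) auto
  finally show ?thesis by simp
qed

lemma inner_ghat: "inner y (\<chi> m. g x (\<theta> m)) = ghat g \<theta> x y"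
  by (simp add: ghat_def inner_vec_def)

theorem proposition2:
  fixes f :: "'a::finite \<Rightarrow> real^'n::finite^'a \<Rightarrow> real"
    and g :: "real^'n^'a \<Rightarrow> 'th \<Rightarrow> real"
    and Theta :: "'th set"
    and X :: "'a \<Rightarrow> (real^'n) set"
    and \<theta> :: "'m::finite \<Rightarrow> 'th"
    and \<chi>f \<chi>g :: real
  assumes samples: "\<And>m. \<theta> m \<in> Theta"
    \<comment> \<open>Assumption 1(i)\<close>
    and A1_convex: "\<And>th i x. th \<in> Theta \<Longrightarrow> (\<forall>j. j \<noteq> i \<longrightarrow> x $ j \<in> X j) \<Longrightarrow>
         convex_on UNIV (\<lambda>u. f i (blk_upd x i u) + g (blk_upd x i u) th)"
    and A1_C1: "\<And>th i x. th \<in> Theta \<Longrightarrow> (\<forall>j. j \<noteq> i \<longrightarrow> x $ j \<in> X j) \<Longrightarrow>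
         (\<forall>u. (\<lambda>u. f i (blk_upd x i u) + g (blk_upd x i u) th) differentiable at u) \<and>
         continuous_on UNIV (grad (\<lambda>u. f i (blk_upd x i u) + g (blk_upd x i u) th))"
    and A1_sets: "\<And>i. X i \<noteq> {} \<and> compact (X i) \<and> convex (X i)"
    \<comment> \<open>Assumption 1(ii)\<close>
    and A1_twice_g: "\<And>th. th \<in> Theta \<Longrightarrow> \<exists>U. open U \<and> convex U \<and> prod_set X \<subseteq> U \<and>
         (\<forall>x\<in>U. (\<lambda>u. g u th) differentiable at x) \<and>
         (\<forall>x\<in>U. grad (\<lambda>u. g u th) differentiable at x)"
    and A1_twice_f: "\<And>i. \<exists>U. open U \<and> convex U \<and> prod_set X \<subseteq> U \<and>
         (\<forall>x\<in>U. f i differentiable at x) \<and>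
         (\<forall>x\<in>U. grad (f i) differentiable at x)"
    \<comment> \<open>Assumption 1(iii)\<close>
    and A1_sum: "\<chi>f + \<chi>g \<ge> 0"
    and A1_monf: "\<And>u v. inner (u - v) ((\<chi> i. pgrad (f i) i u) - (\<chi> i. pgrad (f i) i v))
                          \<ge> \<chi>f * (norm (u - v))\<^sup>2"
    and A1_mong: "\<And>u v th. th \<in> Theta \<Longrightarrow>
         inner (u - v) (grad (\<lambda>w. g w th) u - grad (\<lambda>w. g w th) v) \<ge> \<chi>g * (norm (u - v))\<^sup>2"
  shows "(\<exists>z. VI_sol (Fop f g \<theta>) (prod_set X \<times> prob_simplex) z) \<and>
         (\<forall>xs ys. VI_sol (Fop f g \<theta>) (prod_set X \<times> prob_simplex) (xs, ys) \<longrightarrow> xs \<in> nash_set f g \<theta> X)"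
proof -
  define K where "K = prod_set X \<times> (prob_simplex :: (real^'m) set)"
  have PS: "compact (prod_set X)" "convex (prod_set X)" "prod_set X \<noteq> {}"
    using prod_set_props[of X] A1_sets by blast+
  note SS = simplex_props
  have fdiff: "f i differentiable at x" and fgd: "grad (f i) differentiable at x"
    if "x \<in> prod_set X" for i x using A1_twice_f[of i] that by blast+
  have gdiff: "(\<lambda>u. g u (\<theta> m)) differentiable at x" and ggd: "grad (\<lambda>u. g u (\<theta> m)) differentiable at x"
    if "x \<in> prod_set X" for m x using A1_twice_g[OF samples[of m]] that by blast+
  have fcont: "continuous_on (prod_set X) (grad (f i))" for i
    by (meson continuous_at_imp_continuous_on differentiable_imp_continuous_within fgd)
  have gcont: "continuous_on (prod_set X) (grad (\<lambda>u. g u (\<theta> m)))" for m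
    by (rule continuous_at_imp_continuous_on) (auto intro: differentiable_imp_continuous_within ggd)
  have g0cont: "continuous_on (prod_set X) (\<lambda>u. g u (\<theta> m))" for m
    by (rule continuous_at_imp_continuous_on) (auto intro: differentiable_imp_continuous_within gdiff)
  define G where "G z = ((\<chi> i. grad (f i) (fst z) $ i) +
      (\<Sum>m\<in>UNIV. (snd z $ m) *\<^sub>R grad (\<lambda>w. g w (\<theta> m)) (fst z)),
      - (\<chi> m. g (fst z) (\<theta> m)))" for z :: "(real^'n^'a) \<times> (real^'m)"
  have FG: "Fop f g \<theta> (x, y) = G (x, y)" if "x \<in> prod_set X" for x y
  proof -
    have gh: "GDERIV (\<lambda>x'. ghat g \<theta> x' y) x :> (\<Sum>m\<in>UNIV. (y $ m) *\<^sub>R grad (\<lambda>w. g w (\<theta> m)) x)"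
      using ghat_x_gderiv gdiff that by blast
    then have ghd: "(\<lambda>x'. ghat g \<theta> x' y) differentiable at x"
      unfolding gderiv_def differentiable_def by blast
    have "pgrad (f i) i x = grad (f i) x $ i" for i using pgrad_eq fdiff that by blast
    moreover have "pgrad (\<lambda>x'. ghat g \<theta> x' y) i x = (\<Sum>m\<in>UNIV. (y $ m) *\<^sub>R grad (\<lambda>w. g w (\<theta> m)) x) $ i" for i
      using pgrad_eq[OF ghd] grad_eq[OF gh] by simp
    moreover have "grad (\<lambda>y'. ghat g \<theta> x y') y = (\<chi> m. g x (\<theta> m))"
      using grad_eq[OF ghat_y_gderiv] by blast
    ultimately show ?thesis unfolding Fop_def G_def by (simp add: vec_eq_iff)
  qed
  have Kc: "compact K" "convex K" "K \<noteq> {}" using PS SS unfolding K_def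
    by (auto intro!: compact_Times convex_Times)
  have fstK: "fst ` K \<subseteq> prod_set X" unfolding K_def by auto
  have cfst: "continuous_on K fst" by (intro continuous_intros)
  have Gc: "continuous_on K G"
    unfolding G_def
    by (intro continuous_intros continuous_on_compose2[OF fcont cfst fstK]
          continuous_on_compose2[OF gcont cfst fstK] continuous_on_compose2[OF g0cont cfst fstK])
  define T where "T z = closest_point K (z - G z)" for z
  have Tc: "continuous_on K T" unfolding T_def
    by (intro continuous_on_compose2[OF continuous_on_closest_point[OF Kc(2) compact_imp_closed[OF Kc(1)] Kc(3)]])
       (auto intro!: continuous_intros Gc)
  have TK: "T \<in> K \<rightarrow> K" unfolding T_def
    using closest_point_in_set[OF compact_imp_closed[OF Kc(1)] Kc(3)] by blast
  obtain z where zK: "z \<in> K" and fixz: "T z = z" using brouwer[OF Kc Tc TK] by blast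
  have "VI_sol (Fop f g \<theta>) K z"
    unfolding VI_sol_def
  proof (intro conjI ballI zK)
    fix w assume "w \<in> K"
    from closest_point_dot[OF Kc(2) compact_imp_closed[OF Kc(1)] this, of "z - G z"]
    have "inner (z - G z - z) (w - z) \<le> 0" using fixz unfolding T_def by simp
    then have "0 \<le> inner (w - z) (G z)" by (simp add: inner_commute)
    moreover have "Fop f g \<theta> z = G z" using zK FG unfolding K_def by (cases z) auto
    ultimately show "0 \<le> inner (w - z) (Fop f g \<theta> z)" by simp
  qed
  then have part1: "\<exists>z. VI_sol (Fop f g \<theta>) (prod_set X \<times> prob_simplex) z" unfolding K_def by blast
  have part2: "xs \<in> nash_set f g \<theta> X" if VI: "VI_sol (Fop f g \<theta>) (prod_set X \<times> prob_simplex) (xs, ys)" for xs ys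
  proof -
    have xsX: "xs \<in> prod_set X" and ysS: "ys \<in> prob_simplex" using VI unfolding VI_sol_def by auto
    have VIw: "0 \<le> inner (w - (xs, ys)) (G (xs, ys))" if "w \<in> K" for w
      using VI that FG[OF xsX] unfolding VI_sol_def K_def by auto
    have gk: "g xs (\<theta> k) \<le> ghat g \<theta> xs ys" for k
    proof -
      have "(xs, \<chi> m. if m = k then (1::real) else 0) \<in> K" using xsX unit_in_simplex unfolding K_def by auto
      from VIw[OF this] have "0 \<le> - inner ((\<chi> m. if m = k then (1::real) else 0) - ys) (\<chi> m. g xs (\<theta> m))"
        unfolding G_def by simp
      then have "inner (\<chi> m. if m = k then (1::real) else 0) (\<chi> m. g xs (\<theta> m)) - inner ys (\<chi> m. g xs (\<theta> m)) \<le> 0"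
        by (simp only: inner_diff_left)
      then show ?thesis unfolding inner_unit by (simp add: inner_ghat)
    qed
    have maxle: "Max ((\<lambda>m. g xs (\<theta> m)) ` UNIV) \<le> ghat g \<theta> xs ys"
      using gk by (simp add: Max_le_iff)
    have "cost f g \<theta> i xs \<le> cost f g \<theta> i (blk_upd xs i u)" if uX: "u \<in> X i" for i u
    proof -
      define phi where "phi u' = f i (blk_upd xs i u') + ghat g \<theta> (blk_upd xs i u') ys" for u'
      have oth: "\<forall>j. j \<noteq> i \<longrightarrow> xs $ j \<in> X j" using xsX unfolding prod_set_def by auto
      have phi_eq: "phi = (\<lambda>u'. \<Sum>m\<in>UNIV. ys $ m * (f i (blk_upd xs i u') + g (blk_upd xs i u') (\<theta> m)))"
        using ysS unfolding phi_def ghat_def prob_simplex_def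
        by (auto simp: algebra_simps sum.distrib sum_distrib_right[symmetric] intro!: ext)
      have cvx: "convex_on UNIV phi" unfolding phi_eq
        using ysS A1_convex[OF samples oth] unfolding prob_simplex_def
        by (intro convex_on_sum_fun) auto
      have gh: "GDERIV (\<lambda>x'. ghat g \<theta> x' ys) xs :> (\<Sum>m\<in>UNIV. (ys $ m) *\<^sub>R grad (\<lambda>w. g w (\<theta> m)) xs)"
        using ghat_x_gderiv gdiff xsX by blast
      then have ghd: "(\<lambda>x'. ghat g \<theta> x' ys) differentiable at xs"
        unfolding gderiv_def differentiable_def by blast
      have D: "GDERIV phi (xs $ i) :> grad (f i) xs $ i + (\<Sum>m\<in>UNIV. (ys $ m) *\<^sub>R grad (\<lambda>w. g w (\<theta> m)) xs) $ i"
        unfolding phi_def using GDERIV_add[OF gderiv_blk[OF fdiff[OF xsX]] gderiv_blk[OF ghd]] grad_eq[OF gh]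
        by simp
      have "(blk_upd xs i u, ys) \<in> K" using xsX uX ysS unfolding K_def prod_set_def blk_upd_def by auto
      from VIw[OF this] have "0 \<le> inner (blk_upd xs i u - xs) (fst (G (xs, ys)))"
        by (cases "G (xs, ys)") simp
      then have "0 \<le> inner (u - xs $ i) (grad (f i) xs $ i + (\<Sum>m\<in>UNIV. (ys $ m) *\<^sub>R grad (\<lambda>w. g w (\<theta> m)) xs) $ i)"
        unfolding blk_diff inner_Lb G_def by simp
      from first_order_min[OF cvx D this] have "phi (xs $ i) \<le> phi u" .
      then have "f i xs + ghat g \<theta> xs ys \<le> f i (blk_upd xs i u) + ghat g \<theta> (blk_upd xs i u) ys"
        unfolding phi_def blk_self .
      then show ?thesis unfolding cost_def using maxle ghat_le_Max[OF ysS, of g \<theta> "blk_upd xs i u"] by linarith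
    qed
    then show ?thesis using xsX unfolding nash_set_def by auto
  qed
  show ?thesis using part1 part2 by blast
qed

end
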